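(* Let $0<\beta<\zeta$ (so that $\xi_2(\beta)<\xi_1(\beta)$). For $C\in(\xi_2(\beta),\xi_1(\beta))$ let $z_f^C\in(0,d)$ be the unique point such that $F_{z_f^C}\mathbf 1_{[0,z_f^C]}+G_{C,z_f^C}\mathbf 1_{(z_f^C,d]}$ solves Problem 1 with derivative $0$ at $0$ and value $C$ at $d$, and let $z_g^C\in(d,\infty)$ be the unique point such that $H_{C,z_g^C}\mathbf 1_{[d,z_g^C]}+K_{z_g^C}\mathbf 1_{(z_g^C,\infty)}$ is bounded and solves Problem 2 with value $C$ at $d$. (i) The map $(\xi_2(\beta),\xi_1(\beta))\to\mathbb R$, $C\mapsto G_{C,z_f^C}'(d)$ is strictly increasing, and $G_{\xi_1(\beta),d}'(d)=-\beta$. (ii) The map $(\xi_2(\beta),\xi_1(\beta))\to\mathbb R$, $C\mapsto H_{C,z_g^C}'(d)$ is strictly decreasing, and $H_{\xi_2(\beta),d}'(d)=-\beta$.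
   Context: Fix $\mu\in\mathbb R$, $\sigma>0$, $u_0>0$, $r>0$, $\beta>0$, $d>0$. For $u\in[0,u_0]$ let $\theta_1(u)=\frac{\sqrt{(\mu-u)^2+2r\sigma^2}+(\mu-u)}{\sigma^2}$, $\theta_2(u)=\frac{\sqrt{(\mu-u)^2+2r\sigma^2}-(\mu-u)}{\sigma^2}$; write $\alpha_i=\theta_i(u_0)$, $\gamma_i=\theta_i(0)$. Define $\zeta=\frac{\alpha_1\alpha_2(e^{\alpha_1d}-e^{-\alpha_2d})}{r(\alpha_1+\alpha_2)e^{\alpha_1d}}$, $\xi_1(\beta)=\frac{\beta u_0}{r}-\beta\frac{e^{\alpha_1d}+\frac{\alpha_1}{\alpha_2}e^{-\alpha_2d}}{\alpha_1(e^{\alpha_1d}-e^{-\alpha_2d})}$, $\xi_2(\beta)=\frac{\beta u_0-1}{r}+\frac{\beta}{\alpha_2}$. For $s\in(0,d]$, $t\ge d$, real $C$: $F_s(z)=\frac{\beta u_0}{r}-\beta\frac{e^{\alpha_1z}+\frac{\alpha_1}{\alpha_2}e^{-\alpha_2z}}{\alpha_1(e^{\alpha_1s}-e^{-\alpha_2s})}$; $G_{C,s}(z)=\frac{C\gamma_2e^{-\gamma_2(s-d)}-\beta}{\gamma_1e^{\gamma_1s}+\gamma_2e^{(\gamma_1+\gamma_2)d}e^{-\gamma_2s}}(e^{\gamma_1z}-e^{(\gamma_1+\gamma_2)d}e^{-\gamma_2z})+Ce^{-\gamma_2(z-d)}$; $H_{C,t}(z)=-\frac1r+\frac{C+\frac1r-\frac{\beta}{\gamma_2}e^{-\gamma_2(d-t)}}{e^{\gamma_1d}+\frac{\gamma_1}{\gamma_2}e^{(\gamma_1+\gamma_2)t}e^{-\gamma_2d}}(e^{\gamma_1z}+\frac{\gamma_1}{\gamma_2}e^{(\gamma_1+\gamma_2)t}e^{-\gamma_2z})+\frac{\beta}{\gamma_2}e^{-\gamma_2(z-t)}$;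 $K_t(z)=\frac{\beta u_0-1}{r}+\frac{\beta}{\alpha_2}e^{-\alpha_2(z-t)}$. Problem 1: a bounded $C^2$ function $f$ on $[0,d]$ with $-rf-\mu f'+\frac{\sigma^2}{2}f''+\sup_{u\in[0,u_0]}\{(\beta+f')u\}=0$ on $[0,d]$. Problem 2: a bounded $C^2$ function $g$ on $[d,\infty)$ with $-rg-\mu g'+\frac{\sigma^2}{2}g''+\sup_{u\in[0,u_0]}\{(\beta+g')u\}=1$ on $[d,\infty)$. (The existence and uniqueness of $z_f^C,z_g^C$ for $C$ in the stated interval is established in the paper.) *)

theory Defs
  imports "HOL-Analysis.Analysis"
begin

definition theta1 :: "real \<Rightarrow> real \<Rightarrow> real \<Rightarrow> real \<Rightarrow> real" where
  "theta1 mu sg r u = (sqrt ((mu - u)^2 + 2*r* sg^2) + (mu - u)) / sg^2"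

definition theta2 :: "real \<Rightarrow> real \<Rightarrow> real \<Rightarrow> real \<Rightarrow> real" where
  "theta2 mu sg r u = (sqrt ((mu - u)^2 + 2*r* sg^2) - (mu - u)) / sg^2"

definition zeta :: "real \<Rightarrow> real \<Rightarrow> real \<Rightarrow> real \<Rightarrow> real \<Rightarrow> real" where
  "zeta mu sg u0 r d =
     (let a1 = theta1 mu sg r u0; a2 = theta2 mu sg r u0 in
      a1 * a2 * (exp (a1*d) - exp (-a2*d)) / (r * (a1 + a2) * exp (a1*d)))"

definition xi1 :: "real \<Rightarrow> real \<Rightarrow> real \<Rightarrow> real \<Rightarrow> real \<Rightarrow> real \<Rightarrow> real" where
  "xi1 mu sg u0 r d beta =
     (let a1 = theta1 mu sg r u0; a2 = theta2 mu sg r u0 in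
      beta*u0/r - beta * (exp (a1*d) + a1/a2 * exp (-a2*d)) / (a1 * (exp (a1*d) - exp (-a2*d))))"

definition xi2 :: "real \<Rightarrow> real \<Rightarrow> real \<Rightarrow> real \<Rightarrow> real \<Rightarrow> real" where
  "xi2 mu sg u0 r beta = (beta*u0 - 1)/r + beta / theta2 mu sg r u0"

definition Ff :: "real \<Rightarrow> real \<Rightarrow> real \<Rightarrow> real \<Rightarrow> real \<Rightarrow> real \<Rightarrow> real \<Rightarrow> real" where
  "Ff mu sg u0 r beta s z =
     (let a1 = theta1 mu sg r u0; a2 = theta2 mu sg r u0 in
      beta*u0/r - beta * (exp (a1*z) + a1/a2 * exp (-a2*z)) / (a1 * (exp (a1* s) - exp (-a2* s))))"

definition Gf :: "real \<Rightarrow> real \<Rightarrow> real \<Rightarrow> real \<Rightarrow> real \<Rightarrow> real \<Rightarrow> real \<Rightarrow> real \<Rightarrow> real" where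
  "Gf mu sg r beta d C s z =
     (let g1 = theta1 mu sg r 0; g2 = theta2 mu sg r 0 in
      (C * g2 * exp (-g2*(s - d)) - beta)
        / (g1 * exp (g1* s) + g2 * exp ((g1 + g2)*d) * exp (-g2* s))
        * (exp (g1*z) - exp ((g1 + g2)*d) * exp (-g2*z))
      + C * exp (-g2*(z - d)))"

definition Hf :: "real \<Rightarrow> real \<Rightarrow> real \<Rightarrow> real \<Rightarrow> real \<Rightarrow> real \<Rightarrow> real \<Rightarrow> real \<Rightarrow> real" where
  "Hf mu sg r beta d C t z =
     (let g1 = theta1 mu sg r 0; g2 = theta2 mu sg r 0 in
      - 1/r
      + (C + 1/r - beta/g2 * exp (-g2*(d - t)))
        / (exp (g1*d) + g1/g2 * exp ((g1 + g2)*t) * exp (-g2*d))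
        * (exp (g1*z) + g1/g2 * exp ((g1 + g2)*t) * exp (-g2*z))
      + beta/g2 * exp (-g2*(z - t)))"

definition Kf :: "real \<Rightarrow> real \<Rightarrow> real \<Rightarrow> real \<Rightarrow> real \<Rightarrow> real \<Rightarrow> real \<Rightarrow> real" where
  "Kf mu sg u0 r beta t z =
     (let a2 = theta2 mu sg r u0 in (beta*u0 - 1)/r + beta/a2 * exp (-a2*(z - t)))"

definition solves_HJB ::
  "real \<Rightarrow> real \<Rightarrow> real \<Rightarrow> real \<Rightarrow> real \<Rightarrow> real set \<Rightarrow> real \<Rightarrow> (real \<Rightarrow> real) \<Rightarrow> bool" where
  "solves_HJB mu sg u0 r beta S rhs f \<longleftrightarrow>
     (\<exists>f1 f2.
        (\<forall>x\<in>S. (f has_real_derivative f1 x) (at x within S)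
               \<and> (f1 has_real_derivative f2 x) (at x within S))
      \<and> continuous_on S f2
      \<and> bounded (f ` S)
      \<and> (\<forall>x\<in>S. - r * f x - mu * f1 x + sg^2/2 * f2 x
                  + (SUP u\<in>{0..u0}. (beta + f1 x) * u) = rhs))"

definition solves_P1 where
  "solves_P1 mu sg u0 r beta d f = solves_HJB mu sg u0 r beta {0..d} 0 f"

definition solves_P2 where
  "solves_P2 mu sg u0 r beta d g = solves_HJB mu sg u0 r beta {d..} 1 g"

definition is_zf :: "real \<Rightarrow> real \<Rightarrow> real \<Rightarrow> real \<Rightarrow> real \<Rightarrow> real \<Rightarrow> real \<Rightarrow> real \<Rightarrow> bool" where
  "is_zf mu sg u0 r beta d C s \<longleftrightarrow>
     (let f = (\<lambda>z. if z \<le> s then Ff mu sg u0 r beta s z else Gf mu sg r beta d C s z) in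
       solves_P1 mu sg u0 r beta d f
     \<and> (f has_real_derivative 0) (at 0 within {0..d})
     \<and> f d = C)"

definition is_zg :: "real \<Rightarrow> real \<Rightarrow> real \<Rightarrow> real \<Rightarrow> real \<Rightarrow> real \<Rightarrow> real \<Rightarrow> real \<Rightarrow> bool" where
  "is_zg mu sg u0 r beta d C t \<longleftrightarrow>
     (let g = (\<lambda>z. if z \<le> t then Hf mu sg r beta d C t z else Kf mu sg u0 r beta t z) in
       solves_P2 mu sg u0 r beta d g
     \<and> g d = C)"

end

theory Submission
  imports Defs
begin

lemma sup_lin: fixes u0 a :: real assumes "u0 > 0"
  shows "(SUP u\<in>{0..u0}. a * u) = max 0 (a * u0)"
proof (rule cSup_eq_maximum)
  show "max 0 (a*u0) \<in> (\<lambda>u. a*u) ` {0..u0}"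
  proof (cases "a*u0 \<ge> 0")
    case True thus ?thesis using assms by (auto simp: max_def intro!: image_eqI[where x=u0])
  next
    case False thus ?thesis using assms by (auto simp: max_def intro!: image_eqI[where x=0])
  qed
  fix y assume "y \<in> (\<lambda>u. a*u) ` {0..u0}"
  then obtain u where "u \<in> {0..u0}" "y = a*u" by auto
  then show "y \<le> max 0 (a*u0)"
  proof (cases "a \<ge> 0")
    case True thus ?thesis using \<open>u \<in> {0..u0}\<close> \<open>y = a*u\<close> mult_left_mono[of u u0 a] by auto
  next
    case False thus ?thesis using \<open>u \<in> {0..u0}\<close> \<open>y = a*u\<close> mult_nonpos_nonneg[of a u] by auto
  qed
qed

lemma cont_of_deriv:
  assumes "\<forall>x\<in>S. (w has_real_derivative w1 x) (at x within S)"
  shows "continuous_on S w"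
  using assms continuous_on_eq_continuous_within DERIV_continuous by blast

lemma incr_helper:
  fixes w w1 :: "real \<Rightarrow> real"
  assumes der: "\<forall>x\<in>S. (w has_real_derivative w1 x) (at x within S)"
    and ab: "a < b" "{a..b} \<subseteq> S"
    and pos: "\<And>x. a < x \<Longrightarrow> x < b \<Longrightarrow> w1 x > 0"
  shows "w a < w b"
proof (rule DERIV_pos_imp_increasing_open[OF ab(1)])
  fix x assume x: "a < x" "x < b"
  have "x \<in> interior S"
    using x ab interior_mono[OF ab(2)] by auto
  hence "at x within S = at x" by (rule at_within_interior)
  with der x ab have "DERIV w x :> w1 x" by (metis atLeastAtMost_iff less_imp_le subsetD)
  thus "\<exists>y. DERIV w x :> y \<and> y > 0" using pos x by blast
next
  show "continuous_on {a..b} w" using cont_of_deriv[OF der] ab continuous_on_subset by blast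
qed

lemma decr_helper:
  fixes w w1 :: "real \<Rightarrow> real"
  assumes der: "\<forall>x\<in>S. (w has_real_derivative w1 x) (at x within S)"
    and ab: "a < b" "{a..b} \<subseteq> S"
    and neg: "\<And>x. a < x \<Longrightarrow> x < b \<Longrightarrow> w1 x < 0"
  shows "w a > w b"
proof -
  have "\<forall>x\<in>S. ((\<lambda>x. - w x) has_real_derivative - w1 x) (at x within S)"
    using der by (auto intro: DERIV_minus)
  from incr_helper[OF this ab] neg show ?thesis by force
qed

lemma comp_i:
  fixes w w1 w2 :: "real \<Rightarrow> real" and d r sg :: real
  assumes d: "d > 0" and sg: "sg > 0" and r: "r > 0"
    and der: "\<forall>x\<in>{0..d}. (w has_real_derivative w1 x) (at x within {0..d})
                 \<and> (w1 has_real_derivative w2 x) (at x within {0..d})"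
    and eq: "\<forall>x\<in>{0..d}. w1 x = 0 \<longrightarrow> sg^2/2 * w2 x = r * w x"
    and w10: "w1 0 = 0" and wd: "w d > 0"
  shows "w1 d > 0"
proof (rule ccontr)
  assume neg: "\<not> w1 d > 0"
  let ?S = "{0..d}"
  have derw: "\<forall>x\<in>?S. (w has_real_derivative w1 x) (at x within ?S)" using der by blast
  have derw1: "\<forall>x\<in>?S. (w1 has_real_derivative w2 x) (at x within ?S)" using der by blast
  have pos2: "w2 x > 0" if "x \<in> ?S" "w1 x = 0" "w x > 0" for x
  proof -
    have "sg^2/2 * w2 x > 0" using eq that r by auto
    moreover have "sg^2/2 > 0" using sg by simp
    ultimately show ?thesis by (simp add: zero_less_mult_iff)
  qed
  obtain x0 where x0: "x0 \<in> ?S" and mx: "\<forall>y\<in>?S. w y \<le> w x0"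
    using continuous_attains_sup[of ?S w] cont_of_deriv[OF derw] d by auto
  have wx0: "w x0 > 0" using mx[rule_format, of d] wd d by simp
  have K: False if x: "x \<in> ?S" "x < d" "w1 x = 0" "w x > 0" "\<forall>y\<in>?S. w y \<le> w x" for x
  proof -
    have "w2 x > 0" using pos2 x by blast
    then obtain del where del: "del > 0" "\<forall>h>0. x + h \<in> ?S \<longrightarrow> h < del \<longrightarrow> w1 x < w1 (x + h)"
      using has_real_derivative_pos_inc_right[of w1 "w2 x" x ?S] derw1 x by blast
    define y where "y = x + min del (d - x) / 2"
    have y: "x < y" "y < d" using del(1) x by (auto simp: y_def min_def field_simps)
    have "w x < w y"
    proof (rule incr_helper[OF derw y(1)])
      show "{x..y} \<subseteq> ?S" using x y by auto
      fix z assume z: "x < z" "z < y"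
      have zd: "z - x < del" "x + (z - x) \<in> ?S" using z y x del(1) by (auto simp: y_def min_def field_simps split: if_splits)
      have "w1 x < w1 (x + (z - x))" using del(2)[rule_format, OF _ zd(2) zd(1)] z by simp
      thus "w1 z > 0" using x by simp
    qed
    moreover have "y \<in> ?S" using x y by auto
    ultimately show False using x by force
  qed
  show False
  proof (cases "x0 < d")
    case True
    have "w1 x0 = 0"
    proof (cases "x0 = 0")
      case True thus ?thesis using w10 by simp
    next
      case False
      hence x0i: "0 < x0" using x0 by auto
      have "x0 \<in> interior ?S" using x0i \<open>x0 < d\<close> by simp
      hence "at x0 within ?S = at x0" by (rule at_within_interior)
      hence D: "DERIV w x0 :> w1 x0" using derw x0 by metis
      show ?thesis
      proof (rule DERIV_local_max[OF D])
        show "0 < min x0 (d - x0)" using x0i \<open>x0 < d\<close> by simp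
        show "\<forall>y. \<bar>x0 - y\<bar> < min x0 (d - x0) \<longrightarrow> w y \<le> w x0"
          using mx by (auto simp: abs_if split: if_splits)
      qed
    qed
    thus False using K[of x0] x0 True wx0 mx by blast
  next
    case False
    hence x0d: "x0 = d" using x0 by auto
    show False
    proof (cases "w1 d = 0")
      case True
      have "w2 d > 0" using pos2 True wd d by auto
      then obtain del where del: "del > 0" "\<forall>h>0. d - h \<in> ?S \<longrightarrow> h < del \<longrightarrow> w1 (d - h) < w1 d"
        using has_real_derivative_pos_inc_left[of w1 "w2 d" d ?S] derw1 d by auto
      define y where "y = d - min del d / 2"
      have y: "0 < y" "y < d" using del(1) d by (auto simp: y_def min_def field_simps)
      have "w y > w d"
      proof (rule decr_helper[OF derw y(2)])
        show "{y..d} \<subseteq> ?S" using y by auto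
        fix z assume z: "y < z" "z < d"
        have zd: "d - z < del" "d - (d - z) \<in> ?S" using z y del(1) by (auto simp: y_def min_def field_simps split: if_splits)
        have "w1 (d - (d - z)) < w1 d" using del(2)[rule_format, OF _ zd(2) zd(1)] z by simp
        thus "w1 z < 0" using True by simp
      qed
      thus False using mx[rule_format, of y] x0d y by simp
    next
      case False
      hence "w1 d < 0" using neg by simp
      then obtain del where del: "del > 0" "\<forall>h>0. d - h \<in> ?S \<longrightarrow> h < del \<longrightarrow> w d < w (d - h)"
        using has_real_derivative_neg_dec_left[of w "w1 d" d ?S] derw d by auto
      have hh: "min del d / 2 > 0" "d - min del d / 2 \<in> ?S" "min del d / 2 < del" using del(1) d by (auto simp: min_def field_simps)
      have "w d < w (d - min del d / 2)" using del(2)[rule_format, OF hh(1) hh(2) hh(3)] .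
      thus False using mx[rule_format, OF hh(2)] x0d by simp
    qed
  qed
qed

lemma comp_ii:
  fixes w w1 w2 D :: "real \<Rightarrow> real" and d r sg mu u0 :: real
  assumes sg: "sg > 0" and r: "r > 0" and u0: "u0 > 0"
    and der: "\<forall>x\<in>{d..}. (w has_real_derivative w1 x) (at x within {d..})
                 \<and> (w1 has_real_derivative w2 x) (at x within {d..})"
    and eq: "\<forall>x\<in>{d..}. sg^2/2 * w2 x = r * w x + mu * w1 x - D x"
    and D0: "\<forall>x\<in>{d..}. w1 x = 0 \<longrightarrow> D x = 0"
    and Dp: "\<forall>x\<in>{d..}. w1 x > 0 \<longrightarrow> D x \<le> u0 * w1 x"
    and B: "\<forall>x\<in>{d..}. \<bar>w x\<bar> \<le> B"
    and wd: "w d > 0"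
  shows "w1 d < 0"
proof (rule ccontr)
  assume neg: "\<not> w1 d < 0"
  let ?S = "{d..}"
  have derw: "\<forall>x\<in>?S. (w has_real_derivative w1 x) (at x within ?S)" using der by blast
  have derw1: "\<forall>x\<in>?S. (w1 has_real_derivative w2 x) (at x within ?S)" using der by blast
  have cw1: "continuous_on ?S w1" using cont_of_deriv[OF derw1] .
  have sgp: "sg^2/2 > 0" using sg by simp
  have pos2: "w2 x > 0" if "x \<in> ?S" "w1 x = 0" "w x > 0" for x
  proof -
    have "sg^2/2 * w2 x > 0" using eq D0 that r by auto
    thus ?thesis using sgp by (simp add: zero_less_mult_iff)
  qed
  obtain x1 where x1: "x1 \<ge> d" "w x1 > 0" "w1 x1 > 0"
  proof (cases "w1 d = 0")
    case False
    thus ?thesis using that[of d] neg wd by auto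
  next
    case True
    have "w2 d > 0" using pos2 True wd by auto
    then obtain del where del: "del > 0" "\<forall>h>0. d + h \<in> ?S \<longrightarrow> h < del \<longrightarrow> w1 d < w1 (d + h)"
      using has_real_derivative_pos_inc_right[of w1 "w2 d" d ?S] derw1 by auto
    define y where "y = d + del / 2"
    have y: "d < y" using del(1) by (simp add: y_def)
    have "w d < w y"
    proof (rule incr_helper[OF derw y])
      show "{d..y} \<subseteq> ?S" by auto
      fix z assume z: "d < z" "z < y"
      have zd: "z - d < del" "d + (z - d) \<in> ?S" using z by (auto simp: y_def)
      have "w1 d < w1 (d + (z - d))" using del(2)[rule_format, OF _ zd(2) zd(1)] z by simp
      thus "w1 z > 0" using True by simp
    qed
    moreover have "w1 y > 0"
    proof -
      have zd: "y - d < del" "d + (y - d) \<in> ?S" using y del(1) by (auto simp: y_def)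
      have "w1 d < w1 (d + (y - d))" using del(2)[rule_format, OF _ zd(2) zd(1)] y by simp
      thus ?thesis using True by simp
    qed
    ultimately show ?thesis using that[of y] y wd by auto
  qed
  have st2: "w1 x > 0" if x: "x \<ge> x1" for x
  proof (rule ccontr)
    assume "\<not> w1 x > 0"
    hence "w1 x \<le> 0" by simp
    have cx: "continuous_on {x1..x} w1" by (rule continuous_on_subset[OF cw1]) (use x1 in auto)
    obtain z where z: "x1 \<le> z" "z \<le> x" "w1 z = 0"
      using IVT2'[of w1 x 0 x1, OF \<open>w1 x \<le> 0\<close> _ x cx] x1 by auto
    define Z where "Z = {t \<in> {x1..x}. w1 t = 0}"
    have Zc: "closed Z" unfolding Z_def by (rule continuous_closed_preimage_constant[OF cx closed_atLeastAtMost])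
    have Zne: "Z \<noteq> {}" using z by (auto simp: Z_def)
    have Zb: "bdd_below Z" by (auto simp: Z_def bdd_below_def)
    define x2 where "x2 = Inf Z"
    have x2Z: "x2 \<in> Z" using closed_contains_Inf[OF Zne Zb Zc] by (simp add: x2_def)
    hence x2: "x1 \<le> x2" "x2 \<le> x" "w1 x2 = 0" by (auto simp: Z_def)
    have x12: "x1 < x2" using x2 x1 by (metis order.order_iff_strict less_irrefl)
    have before: "w1 t > 0" if t: "x1 \<le> t" "t < x2" for t
    proof (rule ccontr)
      assume "\<not> w1 t > 0"
      hence "w1 t \<le> 0" by simp
      have ct: "continuous_on {x1..t} w1" by (rule continuous_on_subset[OF cx]) (use t x2 in auto)
      obtain z' where z': "x1 \<le> z'" "z' \<le> t" "w1 z' = 0"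
        using IVT2'[of w1 t 0 x1, OF \<open>w1 t \<le> 0\<close> _ t(1) ct] x1 by auto
      have "z' \<in> Z" using z' t x2 by (auto simp: Z_def)
      hence "x2 \<le> z'" unfolding x2_def using Zb by (rule cInf_lower)
      thus False using z' t by simp
    qed
    have "w x1 < w x2"
    proof (rule incr_helper[OF derw x12])
      show "{x1..x2} \<subseteq> ?S" using x1 by auto
      fix t assume "x1 < t" "t < x2" thus "w1 t > 0" using before by simp
    qed
    hence "w x2 > 0" using x1 by simp
    hence "w2 x2 > 0" using pos2 x2 x1 by auto
    then obtain del where del: "del > 0" "\<forall>h>0. x2 - h \<in> ?S \<longrightarrow> h < del \<longrightarrow> w1 (x2 - h) < w1 x2"
      using has_real_derivative_pos_inc_left[of w1 "w2 x2" x2 ?S] derw1 x2 x1 by auto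
    define h where "h = min del (x2 - x1) / 2"
    have h: "h > 0" "x2 - h \<in> ?S" "h < del" "x1 \<le> x2 - h" "x2 - h < x2"
      using del(1) x12 x1 by (auto simp: h_def min_def field_simps)
    have "w1 (x2 - h) < 0" using del(2)[rule_format, OF h(1) h(2) h(3)] x2 by simp
    thus False using before[OF h(4) h(5)] by simp
  qed
  have wlow: "w x \<ge> w x1" if "x \<ge> x1" for x
  proof (cases "x = x1")
    case False
    hence "x1 < x" using that by simp
    have "w x1 < w x"
      by (rule incr_helper[OF derw \<open>x1 < x\<close>]) (use x1 st2 in auto)
    thus ?thesis by simp
  qed simp
  define m where "m = w x1"
  define k where "k = 2 * (\<bar>mu\<bar> + u0) / sg^2"
  define c where "c = 2 * r * m / sg^2"
  have kpos: "k \<ge> 0" using u0 by (simp add: k_def)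
  have cpos: "c > 0" using r x1 sg by (simp add: c_def m_def)
  have ineq: "w2 x + k * w1 x \<ge> c" if "x \<ge> x1" for x
  proof -
    have xS: "x \<in> ?S" using that x1 by auto
    have p: "w1 x > 0" using st2 that by simp
    have "sg^2/2 * w2 x = r * w x + mu * w1 x - D x" using eq xS by simp
    also have "\<dots> \<ge> r * m - (\<bar>mu\<bar> + u0) * w1 x"
    proof -
      have "r * w x \<ge> r * m" using wlow[OF that] r by (simp add: m_def)
      moreover have "mu * w1 x \<ge> - \<bar>mu\<bar> * w1 x"
      proof -
        have "- \<bar>mu\<bar> \<le> mu" by simp
        from mult_right_mono[OF this] p show ?thesis by simp
      qed
      moreover have "D x \<le> u0 * w1 x" using Dp xS p by simp
      ultimately show ?thesis by (simp add: algebra_simps)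
    qed
    finally have "sg^2/2 * w2 x \<ge> r * m - (\<bar>mu\<bar> + u0) * w1 x" .
    hence "2/sg^2 * (sg^2/2 * w2 x) \<ge> 2/sg^2 * (r * m - (\<bar>mu\<bar> + u0) * w1 x)"
      using sg by (intro mult_left_mono) auto
    thus ?thesis using sg by (simp add: k_def c_def field_simps)
  qed
  define phi where "phi x = w1 x + k * w x - c * x" for x
  define a where "a = x1 + 1"
  have atd: "DERIV f x :> f' x" if "x > d" "\<forall>y\<in>?S. (f has_real_derivative f' y) (at y within ?S)" for f f' x
  proof -
    have "x \<in> interior ?S" using that by simp
    hence "at x within ?S = at x" by (rule at_within_interior)
    thus ?thesis using that by (metis atLeast_iff less_imp_le)
  qed
  have phimono: "phi x \<ge> phi a" if "x \<ge> a" for x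
  proof (rule DERIV_nonneg_imp_nondecreasing[OF that])
    fix y assume y: "a \<le> y" "y \<le> x"
    hence yd: "y > d" "y \<ge> x1" using x1 by (auto simp: a_def)
    have "DERIV phi y :> w2 y + k * w1 y - c"
      unfolding phi_def[abs_def]
      by (auto intro!: derivative_eq_intros atd[OF yd(1) derw1] atd[OF yd(1) derw])
    moreover have "w2 y + k * w1 y - c \<ge> 0" using ineq[OF yd(2)] by simp
    ultimately show "\<exists>l. DERIV phi y :> l \<and> 0 \<le> l" by blast
  qed
  define X where "X = max a ((1 - phi a + k * B) / c)"
  have big: "w1 x \<ge> 1" if "x \<ge> X" for x
  proof -
    have xa: "x \<ge> a" using that by (simp add: X_def)
    have "phi x \<ge> phi a" using phimono[OF xa] .
    hence "w1 x \<ge> phi a - k * w x + c * x" by (simp add: phi_def)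
    moreover have "k * w x \<le> k * B" using B xa x1 kpos by (intro mult_left_mono) (auto simp: a_def abs_le_iff)
    moreover have "c * x \<ge> 1 - phi a + k * B"
    proof -
      have "x \<ge> (1 - phi a + k * B) / c" using that by (simp add: X_def)
      thus ?thesis using cpos by (simp add: field_simps)
    qed
    ultimately show ?thesis by linarith
  qed
  define Y where "Y = X + 2 * B + 1"
  have Bnn: "B \<ge> 0" using B[rule_format, of d] by simp
  have XY: "X \<le> Y" using Bnn by (simp add: Y_def)
  have "w Y - Y \<ge> w X - X"
  proof (rule DERIV_nonneg_imp_nondecreasing[OF XY, of "\<lambda>x. w x - x"])
    fix y assume y: "X \<le> y" "y \<le> Y"
    hence yd: "y > d" using x1 by (auto simp: X_def a_def)
    have "DERIV (\<lambda>x. w x - x) y :> w1 y - 1"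
      by (auto intro!: derivative_eq_intros atd[OF yd derw])
    thus "\<exists>l. DERIV (\<lambda>x. w x - x) y :> l \<and> 0 \<le> l" using big[OF y(1)] by auto
  qed
  moreover have "\<bar>w Y\<bar> \<le> B" "\<bar>w X\<bar> \<le> B" using B x1 XY by (auto simp: X_def a_def)
  ultimately show False by (simp add: Y_def abs_le_iff)
qed

lemma gen_deriv_G:
  "DERIV (\<lambda>z. A * (exp (g1*z) - E * exp (-g2*z)) + C * exp (-g2*(z - d))) z :>
     A * (g1 * exp (g1*z) + g2 * E * exp (-g2*z)) - C * g2 * exp (-g2*(z - d))"
  by (auto intro!: derivative_eq_intros simp: algebra_simps)

lemma gen_deriv_H:
  "DERIV (\<lambda>z. - 1/r + A * (exp (g1*z) + E * exp (-g2*z)) + b * exp (-g2*(z - t))) z :>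
     A * (g1 * exp (g1*z) - g2 * E * exp (-g2*z)) - b * g2 * exp (-g2*(z - t))"
  by (auto intro!: derivative_eq_intros simp: algebra_simps)

lemma Gf_deriv:
  fixes mu sg r beta d C s z :: real
  defines "g1 \<equiv> theta1 mu sg r 0" and "g2 \<equiv> theta2 mu sg r 0"
  defines "A \<equiv> (C * g2 * exp (-g2*(s - d)) - beta)
        / (g1 * exp (g1* s) + g2 * exp ((g1 + g2)*d) * exp (-g2* s))"
  shows "DERIV (Gf mu sg r beta d C s) z :>
     A * (g1 * exp (g1*z) + g2 * exp ((g1 + g2)*d) * exp (-g2*z)) - C * g2 * exp (-g2*(z - d))"
proof -
  have eq: "Gf mu sg r beta d C s = (\<lambda>z. A * (exp (g1*z) - exp ((g1 + g2)*d) * exp (-g2*z)) + C * exp (-g2*(z - d)))"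
    unfolding Gf_def Let_def g1_def g2_def A_def by (rule ext) simp
  show ?thesis unfolding eq using gen_deriv_G[of A g1 "exp ((g1 + g2)*d)" g2 C d z] by simp
qed

lemma Hf_deriv:
  fixes mu sg r beta d C t z :: real
  defines "g1 \<equiv> theta1 mu sg r 0" and "g2 \<equiv> theta2 mu sg r 0"
  defines "A \<equiv> (C + 1/r - beta/g2 * exp (-g2*(d - t)))
        / (exp (g1*d) + g1/g2 * exp ((g1 + g2)*t) * exp (-g2*d))"
  shows "DERIV (Hf mu sg r beta d C t) z :>
     A * (g1 * exp (g1*z) - g2 * (g1/g2 * exp ((g1 + g2)*t)) * exp (-g2*z)) - beta/g2 * g2 * exp (-g2*(z - t))"
proof -
  have eq: "Hf mu sg r beta d C t = (\<lambda>z. - 1/r + A * (exp (g1*z) + (g1/g2 * exp ((g1 + g2)*t)) * exp (-g2*z)) + beta/g2 * exp (-g2*(z - t)))"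
    unfolding Hf_def Let_def g1_def g2_def A_def by (rule ext) simp
  show ?thesis unfolding eq using gen_deriv_H[of r A g1 "g1/g2 * exp ((g1 + g2)*t)" g2 "beta/g2" t z] by simp
qed

lemma theta_pos: assumes "sg > 0" "r > 0" shows "theta1 mu sg r u > 0" "theta2 mu sg r u > 0"
proof -
  have "sqrt ((mu - u)^2 + 2*r* sg^2) > sqrt ((mu-u)^2)"
    using assms by (intro real_sqrt_less_mono) auto
  hence "sqrt ((mu - u)^2 + 2*r* sg^2) > \<bar>mu - u\<bar>" by simp
  thus "theta1 mu sg r u > 0" "theta2 mu sg r u > 0" using assms
    by (auto simp: theta1_def theta2_def intro!: divide_pos_pos)
qed

lemma Gf_end: assumes "sg > 0" "r > 0"
  shows "deriv (Gf mu sg r beta d C d) d = - beta"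
proof -
  let ?g1 = "theta1 mu sg r 0" let ?g2 = "theta2 mu sg r 0"
  have p: "?g1 > 0" "?g2 > 0" using theta_pos[OF assms] by auto
  have e: "exp ((?g1 + ?g2)*d) * exp (-?g2* d) = exp (?g1 * d)"
    by (simp add: exp_add[symmetric] algebra_simps)
  have e': "exp ((?g1 + ?g2)*d) * exp (-(?g2* d)) = exp (?g1 * d)"
    by (simp add: exp_add[symmetric] algebra_simps)
  have nz: "?g1 * exp (?g1 * d) + ?g2 * exp (?g1 * d) \<noteq> 0" using p
    by (metis add_pos_pos exp_gt_zero mult_pos_pos less_irrefl)
  have nz': "?g1 * exp (?g1 * d) + ?g2 * exp ((?g1 + ?g2)*d) * exp (-(?g2* d)) \<noteq> 0"
    using nz e' by (simp add: mult.assoc distrib_right)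
  show ?thesis
    using nz' DERIV_imp_deriv[OF Gf_deriv[of mu sg r beta d C d d]] nz
    by (simp add: Let_def e e' distrib_right[symmetric])
qed

lemma Hf_end: assumes "sg > 0" "r > 0"
  shows "deriv (Hf mu sg r beta d C d) d = - beta"
proof -
  let ?g1 = "theta1 mu sg r 0" let ?g2 = "theta2 mu sg r 0"
  have p: "?g2 > 0" using theta_pos[OF assms] by auto
  have e: "exp ((?g1 + ?g2)*d) * exp (-?g2* d) = exp (?g1 * d)"
    by (simp add: exp_add[symmetric] algebra_simps)
  have e': "exp ((?g1 + ?g2)*d) * exp (-(?g2* d)) = exp (?g1 * d)"
    by (simp add: exp_add[symmetric] algebra_simps)
  show ?thesis
    using p DERIV_imp_deriv[OF Hf_deriv[of mu sg r beta d C d d]]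
    by (simp add: Let_def e e')
qed
lemma zf_extract:
  fixes mu sg u0 r beta d C s :: real
  assumes d: "d > 0" and s: "s \<in> {0<..<d}" and z: "is_zf mu sg u0 r beta d C s"
  obtains f p q where
    "\<forall>x\<in>{0..d}. (f has_real_derivative p x) (at x within {0..d}) \<and> (p has_real_derivative q x) (at x within {0..d})"
    "\<forall>x\<in>{0..d}. - r * f x - mu * p x + sg^2/2 * q x + (SUP u\<in>{0..u0}. (beta + p x) * u) = 0"
    "p 0 = 0" "f d = C" "deriv (Gf mu sg r beta d C s) d = p d"
proof -
  define f where "f = (\<lambda>z. if z \<le> s then Ff mu sg u0 r beta s z else Gf mu sg r beta d C s z)"
  from z obtain p q where pq:
    "\<forall>x\<in>{0..d}. (f has_real_derivative p x) (at x within {0..d}) \<and> (p has_real_derivative q x) (at x within {0..d})"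
    "\<forall>x\<in>{0..d}. - r * f x - mu * p x + sg^2/2 * q x + (SUP u\<in>{0..u0}. (beta + p x) * u) = 0"
    and f0: "(f has_real_derivative 0) (at 0 within {0..d})" and fd: "f d = C"
    unfolding is_zf_def Let_def solves_P1_def solves_HJB_def f_def by blast
  have "p 0 = 0"
  proof (rule has_field_derivative_unique)
    show "(f has_real_derivative p 0) (at 0 within {0..d})" using pq(1) d by auto
    show "(f has_real_derivative 0) (at 0 within {0..d})" by (rule f0)
    show "at 0 within {0..d} \<noteq> bot" using d by (simp add: at_within_Icc_at_right)
  qed
  moreover have "deriv (Gf mu sg r beta d C s) d = p d"
  proof -
    obtain D where D: "DERIV (Gf mu sg r beta d C s) d :> D" using Gf_deriv by blast
    have dd: "deriv (Gf mu sg r beta d C s) d = D" using DERIV_imp_deriv[OF D] .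
    have "(f has_real_derivative D) (at d within {0..d})"
    proof (rule has_field_derivative_transform_within[OF has_field_derivative_at_within[OF D]])
      show "0 < d - s" using s by simp
      show "d \<in> {0..d}" using d by simp
      fix x assume "x \<in> {0..d}" "dist x d < d - s"
      hence "x > s" by (auto simp: dist_real_def)
      thus "Gf mu sg r beta d C s x = f x" by (simp add: f_def)
    qed
    moreover have "(f has_real_derivative p d) (at d within {0..d})" using pq(1) d by auto
    ultimately have "D = p d" using d by (intro has_field_derivative_unique) (auto simp: at_within_Icc_at_left)
    thus ?thesis using dd by simp
  qed
  ultimately show ?thesis using that pq fd by blast
qed

lemma zg_extract:
  fixes mu sg u0 r beta d C t :: real
  assumes t: "t > d" and z: "is_zg mu sg u0 r beta d C t"
  obtains f p q where
    "\<forall>x\<in>{d..}. (f has_real_derivative p x) (at x within {d..}) \<and> (p has_real_derivative q x) (at x within {d..})"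
    "\<forall>x\<in>{d..}. - r * f x - mu * p x + sg^2/2 * q x + (SUP u\<in>{0..u0}. (beta + p x) * u) = 1"
    "bounded (f ` {d..})" "f d = C" "deriv (Hf mu sg r beta d C t) d = p d"
proof -
  define f where "f = (\<lambda>z. if z \<le> t then Hf mu sg r beta d C t z else Kf mu sg u0 r beta t z)"
  from z obtain p q where pq:
    "\<forall>x\<in>{d..}. (f has_real_derivative p x) (at x within {d..}) \<and> (p has_real_derivative q x) (at x within {d..})"
    "\<forall>x\<in>{d..}. - r * f x - mu * p x + sg^2/2 * q x + (SUP u\<in>{0..u0}. (beta + p x) * u) = 1"
    "bounded (f ` {d..})" and fd: "f d = C"
    unfolding is_zg_def Let_def solves_P2_def solves_HJB_def f_def by blast
  moreover have "deriv (Hf mu sg r beta d C t) d = p d"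
  proof -
    obtain D where D: "DERIV (Hf mu sg r beta d C t) d :> D" using Hf_deriv by blast
    have dd: "deriv (Hf mu sg r beta d C t) d = D" using DERIV_imp_deriv[OF D] .
    have "(f has_real_derivative D) (at d within {d..})"
    proof (rule has_field_derivative_transform_within[OF has_field_derivative_at_within[OF D]])
      show "0 < t - d" using t by simp
      show "d \<in> {d..}" by simp
      fix x assume "x \<in> {d..}" "dist x d < t - d"
      hence "x < t" by (auto simp: dist_real_def)
      thus "Hf mu sg r beta d C t x = f x" by (simp add: f_def)
    qed
    moreover have "(f has_real_derivative p d) (at d within {d..})" using pq(1) by auto
    ultimately have "D = p d" by (intro has_field_derivative_unique) (auto simp: at_within_Ici_at_right)
    thus ?thesis using dd by simp
  qed
  ultimately show ?thesis using that by blast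
qed

lemma part_i:
  fixes mu sg u0 r beta d :: real
  assumes sg: "sg > 0" and r: "r > 0" and d: "d > 0"
    and C: "C1 < C2" and s: "s1 \<in> {0<..<d}" "s2 \<in> {0<..<d}"
    and z1: "is_zf mu sg u0 r beta d C1 s1" and z2: "is_zf mu sg u0 r beta d C2 s2"
  shows "deriv (Gf mu sg r beta d C1 s1) d < deriv (Gf mu sg r beta d C2 s2) d"
proof -
  obtain f1 p1 q1 where A1:
    "\<forall>x\<in>{0..d}. (f1 has_real_derivative p1 x) (at x within {0..d}) \<and> (p1 has_real_derivative q1 x) (at x within {0..d})"
    "\<forall>x\<in>{0..d}. - r * f1 x - mu * p1 x + sg^2/2 * q1 x + (SUP u\<in>{0..u0}. (beta + p1 x) * u) = 0"
    "p1 0 = 0" "f1 d = C1" "deriv (Gf mu sg r beta d C1 s1) d = p1 d"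
    using zf_extract[OF d s(1) z1] by blast
  obtain f2 p2 q2 where A2:
    "\<forall>x\<in>{0..d}. (f2 has_real_derivative p2 x) (at x within {0..d}) \<and> (p2 has_real_derivative q2 x) (at x within {0..d})"
    "\<forall>x\<in>{0..d}. - r * f2 x - mu * p2 x + sg^2/2 * q2 x + (SUP u\<in>{0..u0}. (beta + p2 x) * u) = 0"
    "p2 0 = 0" "f2 d = C2" "deriv (Gf mu sg r beta d C2 s2) d = p2 d"
    using zf_extract[OF d s(2) z2] by blast
  have "(\<lambda>x. p2 x - p1 x) d > 0"
  proof (rule comp_i[OF d sg r, where w = "\<lambda>x. f2 x - f1 x" and ?w2.0 = "\<lambda>x. q2 x - q1 x"])
    show "\<forall>x\<in>{0..d}. ((\<lambda>x. f2 x - f1 x) has_real_derivative p2 x - p1 x) (at x within {0..d}) \<and>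
            ((\<lambda>x. p2 x - p1 x) has_real_derivative q2 x - q1 x) (at x within {0..d})"
      using A1(1) A2(1) by (auto intro: DERIV_diff)
    show "\<forall>x\<in>{0..d}. p2 x - p1 x = 0 \<longrightarrow> sg^2/2 * (q2 x - q1 x) = r * (f2 x - f1 x)"
    proof (intro ballI impI)
      fix x assume x: "x \<in> {0..d}" and e: "p2 x - p1 x = 0"
      hence pe: "p2 x = p1 x" by simp
      have e1: "- r * f1 x - mu * p1 x + sg^2/2 * q1 x + (SUP u\<in>{0..u0}. (beta + p1 x) * u) = 0"
        using A1(2) x by blast
      have e2: "- r * f2 x - mu * p1 x + sg^2/2 * q2 x + (SUP u\<in>{0..u0}. (beta + p1 x) * u) = 0"
        using A2(2) x pe by metis
      show "sg^2/2 * (q2 x - q1 x) = r * (f2 x - f1 x)"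
        using e1 e2 by (simp only: right_diff_distrib)
    qed
    show "p2 0 - p1 0 = 0" using A1(3) A2(3) by simp
    show "f2 d - f1 d > 0" using A1(4) A2(4) C by simp
  qed
  thus ?thesis using A1(5) A2(5) by simp
qed

lemma part_ii:
  fixes mu sg u0 r beta d :: real
  assumes sg: "sg > 0" and r: "r > 0" and u0: "u0 > 0"
    and C: "C1 < C2" and t: "t1 \<in> {d<..}" "t2 \<in> {d<..}"
    and z1: "is_zg mu sg u0 r beta d C1 t1" and z2: "is_zg mu sg u0 r beta d C2 t2"
  shows "deriv (Hf mu sg r beta d C2 t2) d < deriv (Hf mu sg r beta d C1 t1) d"
proof -
  have t': "t1 > d" "t2 > d" using t by auto
  obtain f1 p1 q1 where A1:
    "\<forall>x\<in>{d..}. (f1 has_real_derivative p1 x) (at x within {d..}) \<and> (p1 has_real_derivative q1 x) (at x within {d..})"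
    "\<forall>x\<in>{d..}. - r * f1 x - mu * p1 x + sg^2/2 * q1 x + (SUP u\<in>{0..u0}. (beta + p1 x) * u) = 1"
    "bounded (f1 ` {d..})" "f1 d = C1" "deriv (Hf mu sg r beta d C1 t1) d = p1 d"
    using zg_extract[OF t'(1) z1] by blast
  obtain f2 p2 q2 where A2:
    "\<forall>x\<in>{d..}. (f2 has_real_derivative p2 x) (at x within {d..}) \<and> (p2 has_real_derivative q2 x) (at x within {d..})"
    "\<forall>x\<in>{d..}. - r * f2 x - mu * p2 x + sg^2/2 * q2 x + (SUP u\<in>{0..u0}. (beta + p2 x) * u) = 1"
    "bounded (f2 ` {d..})" "f2 d = C2" "deriv (Hf mu sg r beta d C2 t2) d = p2 d"
    using zg_extract[OF t'(2) z2] by blast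
  obtain B1 where B1: "\<forall>x\<in>{d..}. \<bar>f1 x\<bar> \<le> B1" using A1(3) unfolding bounded_real by auto
  obtain B2 where B2: "\<forall>x\<in>{d..}. \<bar>f2 x\<bar> \<le> B2" using A2(3) unfolding bounded_real by auto
  define D where "D x = max 0 ((beta + p2 x) * u0) - max 0 ((beta + p1 x) * u0)" for x
  have H1: "\<forall>x\<in>{d..}. ((\<lambda>x. f2 x - f1 x) has_real_derivative p2 x - p1 x) (at x within {d..}) \<and>
            ((\<lambda>x. p2 x - p1 x) has_real_derivative q2 x - q1 x) (at x within {d..})"
      using A1(1) A2(1) by (auto intro: DERIV_diff)
    have H2: "\<forall>x\<in>{d..}. sg^2/2 * (q2 x - q1 x) = r * (f2 x - f1 x) + mu * (p2 x - p1 x) - D x"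
    proof
      fix x assume x: "x \<in> {d..}"
      have e1: "- r * f1 x - mu * p1 x + sg^2/2 * q1 x + max 0 ((beta + p1 x) * u0) = 1"
        using A1(2) x sup_lin[OF u0] by simp
      have e2: "- r * f2 x - mu * p2 x + sg^2/2 * q2 x + max 0 ((beta + p2 x) * u0) = 1"
        using A2(2) x sup_lin[OF u0] by simp
      show "sg^2/2 * (q2 x - q1 x) = r * (f2 x - f1 x) + mu * (p2 x - p1 x) - D x"
        using e1 e2 unfolding D_def
        by (simp only: right_diff_distrib)
    qed
    have H3: "\<forall>x\<in>{d..}. p2 x - p1 x = 0 \<longrightarrow> D x = 0" by (simp add: D_def)
    have H4: "\<forall>x\<in>{d..}. p2 x - p1 x > 0 \<longrightarrow> D x \<le> u0 * (p2 x - p1 x)"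
    proof (intro ballI impI)
      fix x assume "p2 x - p1 x > 0"
      hence "(beta + p1 x) * u0 \<le> (beta + p2 x) * u0" using u0 by (intro mult_right_mono) auto
      moreover have "(beta + p2 x) * u0 - (beta + p1 x) * u0 = u0 * (p2 x - p1 x)" by (simp add: algebra_simps)
      ultimately show "D x \<le> u0 * (p2 x - p1 x)" unfolding D_def by (simp add: max_def)
    qed
    have H5: "\<forall>x\<in>{d..}. \<bar>f2 x - f1 x\<bar> \<le> B1 + B2"
    proof
      fix x assume "x \<in> {d..}"
      thus "\<bar>f2 x - f1 x\<bar> \<le> B1 + B2" using B1 B2 by (smt (verit))
    qed
    have H6: "f2 d - f1 d > 0" using A1(4) A2(4) C by simp
  have "p2 d - p1 d < 0"
    using comp_ii[OF sg r u0 H1 H2 H3 H4 H5 H6] by simp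
  thus ?thesis using A1(5) A2(5) by simp
qed

theorem lemma4p7:
  fixes mu sg u0 r beta d :: real
  assumes "sg > 0" and "u0 > 0" and "r > 0" and "d > 0"
    and "0 < beta" and "beta < zeta mu sg u0 r d"
  shows
    "(\<forall>C1 C2 s1 s2.
        xi2 mu sg u0 r beta < C1 \<and> C1 < C2 \<and> C2 < xi1 mu sg u0 r d beta
        \<and> s1 \<in> {0<..<d} \<and> s2 \<in> {0<..<d}
        \<and> is_zf mu sg u0 r beta d C1 s1 \<and> is_zf mu sg u0 r beta d C2 s2
        \<longrightarrow> deriv (Gf mu sg r beta d C1 s1) d < deriv (Gf mu sg r beta d C2 s2) d)
     \<and> deriv (Gf mu sg r beta d (xi1 mu sg u0 r d beta) d) d = - beta
     \<and> (\<forall>C1 C2 t1 t2.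
        xi2 mu sg u0 r beta < C1 \<and> C1 < C2 \<and> C2 < xi1 mu sg u0 r d beta
        \<and> t1 \<in> {d<..} \<and> t2 \<in> {d<..}
        \<and> is_zg mu sg u0 r beta d C1 t1 \<and> is_zg mu sg u0 r beta d C2 t2
        \<longrightarrow> deriv (Hf mu sg r beta d C2 t2) d < deriv (Hf mu sg r beta d C1 t1) d)
     \<and> deriv (Hf mu sg r beta d (xi2 mu sg u0 r beta) d) d = - beta"
proof (intro conjI allI impI)
  fix C1 C2 s1 s2 assume h: "xi2 mu sg u0 r beta < C1 \<and> C1 < C2 \<and> C2 < xi1 mu sg u0 r d beta
        \<and> s1 \<in> {0<..<d} \<and> s2 \<in> {0<..<d}
        \<and> is_zf mu sg u0 r beta d C1 s1 \<and> is_zf mu sg u0 r beta d C2 s2"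
  show "deriv (Gf mu sg r beta d C1 s1) d < deriv (Gf mu sg r beta d C2 s2) d"
    using part_i[OF assms(1) assms(3) assms(4)] h by blast
next
  fix C1 C2 t1 t2 assume h: "xi2 mu sg u0 r beta < C1 \<and> C1 < C2 \<and> C2 < xi1 mu sg u0 r d beta
        \<and> t1 \<in> {d<..} \<and> t2 \<in> {d<..}
        \<and> is_zg mu sg u0 r beta d C1 t1 \<and> is_zg mu sg u0 r beta d C2 t2"
  show "deriv (Hf mu sg r beta d C2 t2) d < deriv (Hf mu sg r beta d C1 t1) d"
    using part_ii[OF assms(1) assms(3) assms(2)] h by blast
next
  show "deriv (Gf mu sg r beta d (xi1 mu sg u0 r d beta) d) d = - beta"
    using Gf_end[OF assms(1) assms(3)] .
next
  show "deriv (Hf mu sg r beta d (xi2 mu sg u0 r beta) d) d = - beta"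
    using Hf_end[OF assms(1) assms(3)] .
qed

end
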